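(* Let $1<\chi\le\rho$. The strategy driven by a $(\rho,\chi)$-bidding profile is $\rho$-robust and $\chi$-consistent.
   Context: Online bidding with target $T>0$ and prediction normalized to $1$: a bidder submits increasing positive bids until one is $\ge T$; the cost is the sum of bids up to and including the first bid $\ge T$. A (randomized) strategy $B$ with expected cost $\mathrm{cost}_B(T)$ is $\chi$-consistent if $\mathrm{cost}_B(1)\le\chi$ and $\rho$-robust if $\mathrm{cost}_B(T)\le\rho T$ for all $T>0$. Given $1<\chi\le\rho$, a $(\rho,\chi)$-bidding profile is a non-decreasing, left-continuous $G:\mathbb{R}\to(0,\infty)$ with (offset) $G(x)<1$ for $x<0$ and $G(x)\ge1$ for $x>0$; (robustness) $\int_{-\infty}^{x+1}G(t)\,\mathrm{d} t\le\rho G(x)$ for all $x\in\mathbb{R}$; (consistency) $\int_{-\infty}^1 G(t)\,\mathrm{d} t\le\chi$. The strategy driven by $G$ is the random bid sequence $(G(n+U))_{n\in\mathbb{Z}}$ with a single shared $U\sim\mathrm{Unif}(0,1]$; on target $T$ its cost is $\sum_{n\le n_*}G(n+U)$ where $n_*=\min\{n:G(n+U)\ge T\}$. *)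

theory Defs
  imports "HOL-Analysis.Analysis"
begin

definition bidding_profile :: "real \<Rightarrow> real \<Rightarrow> (real \<Rightarrow> real) \<Rightarrow> bool" where
  "bidding_profile rho chi G \<longleftrightarrow>
     mono G \<and>
     (\<forall>x. continuous (at_left x) G) \<and>
     (\<forall>x. 0 < G x) \<and>
     (\<forall>x<0. G x < 1) \<and> (\<forall>x>0. 1 \<le> G x) \<and>
     (\<forall>x. (\<integral>\<^sup>+ t \<in> {..x+1}. ennreal (G t) \<partial>lborel) \<le> ennreal (rho * G x)) \<and>
     (\<integral>\<^sup>+ t \<in> {..1}. ennreal (G t) \<partial>lborel) \<le> ennreal chi"

definition first_index :: "(real \<Rightarrow> real) \<Rightarrow> real \<Rightarrow> real \<Rightarrow> int" where
  "first_index G T u = Inf {n::int. T \<le> G (real_of_int n + u)}"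

definition profile_cost_at :: "(real \<Rightarrow> real) \<Rightarrow> real \<Rightarrow> real \<Rightarrow> ennreal" where
  "profile_cost_at G T u =
     (\<integral>\<^sup>+ n. indicator {..first_index G T u} n * ennreal (G (real_of_int n + u)) \<partial>count_space UNIV)"

text \<open>Expected cost with a shared \<open>U \<sim> Unif(0,1]\<close>.\<close>
definition profile_cost :: "(real \<Rightarrow> real) \<Rightarrow> real \<Rightarrow> ennreal" where
  "profile_cost G T = (\<integral>\<^sup>+ u \<in> {0<..1}. profile_cost_at G T u \<partial>lborel)"

definition robust_strategy :: "real \<Rightarrow> (real \<Rightarrow> ennreal) \<Rightarrow> bool" where
  "robust_strategy rho cost \<longleftrightarrow> (\<forall>T>0. cost T \<le> ennreal (rho * T))"

definition consistent_strategy :: "real \<Rightarrow> (real \<Rightarrow> ennreal) \<Rightarrow> bool" where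
  "consistent_strategy chi cost \<longleftrightarrow> cost 1 \<le> ennreal chi"

end

theory Submission imports Defs begin

lemma shift_sum:
  fixes H :: "real \<Rightarrow> ennreal" assumes H[measurable]: "H \<in> borel_measurable borel"
  shows "(\<integral>\<^sup>+u. (\<integral>\<^sup>+n. H (real_of_int n + u) \<partial>count_space UNIV) * indicator {0<..1} u \<partial>lborel)
     = (\<integral>\<^sup>+t. H t \<partial>lborel)"
proof -
  interpret P: pair_sigma_finite "count_space (UNIV::int set)" lborel
    by (intro pair_sigma_finite.intro sigma_finite_measure_count_space_countable) (auto intro: lborel.sigma_finite_measure_axioms)
  have m1: "(\<lambda>(n::int, u). H (real_of_int n + u) * indicator {0<..1} u) \<in> borel_measurable (count_space UNIV \<Otimes>\<^sub>M lborel)"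
    by (rule measurable_pair_measure_countable1) auto
  have m2: "(\<lambda>(n::int, t). indicator {0<..1} (t - real_of_int n) * H t) \<in> borel_measurable (count_space UNIV \<Otimes>\<^sub>M lborel)"
    by (rule measurable_pair_measure_countable1) auto
  have "(\<integral>\<^sup>+u. (\<integral>\<^sup>+n. H (real_of_int n + u) \<partial>count_space UNIV) * indicator {0<..1} u \<partial>lborel)
     = (\<integral>\<^sup>+u. (\<integral>\<^sup>+n. H (real_of_int n + u) * indicator {0<..1} u \<partial>count_space UNIV) \<partial>lborel)"
    by (intro nn_integral_cong) (simp add: nn_integral_multc)
  also have "\<dots> = (\<integral>\<^sup>+n. (\<integral>\<^sup>+u. H (real_of_int n + u) * indicator {0<..1} u \<partial>lborel) \<partial>count_space UNIV)"
    using P.Fubini'[OF m1] by simp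
  also have "\<dots> = (\<integral>\<^sup>+n. (\<integral>\<^sup>+t. indicator {0<..1} (t - real_of_int n) * H t \<partial>lborel) \<partial>count_space UNIV)"
  proof -
    have "\<And>n::int. (\<integral>\<^sup>+u. H (real_of_int n + u) * indicator {0<..1} u \<partial>lborel) = (\<integral>\<^sup>+t. indicator {0<..1} (t - real_of_int n) * H t \<partial>lborel)"
      subgoal for n
      using nn_integral_real_affine[of "\<lambda>t. indicator {0<..1} (t - real_of_int n) * H t" 1 "real_of_int n"]
      by (simp add: mult.commute) done
    then show ?thesis by simp
  qed
  also have "\<dots> = (\<integral>\<^sup>+t. (\<integral>\<^sup>+n. indicator {0<..1} (t - real_of_int n) * H t \<partial>count_space UNIV) \<partial>lborel)"
    using P.Fubini'[OF m2] by simp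
  also have "\<dots> = (\<integral>\<^sup>+t. H t \<partial>lborel)"
  proof (intro nn_integral_cong)
    fix t :: real
    assume "t \<in> space lborel"
    have "\<And>n::int. indicator {0<..1} (t - real_of_int n) * H t = H t * (indicator {\<lceil>t\<rceil> - 1} n :: ennreal)"
    proof -
      fix n :: int
      have "(0 < t - real_of_int n \<and> t - real_of_int n \<le> 1) \<longleftrightarrow> n = \<lceil>t\<rceil> - 1"
        by (auto simp: ceiling_eq_iff) (linarith+)?
      then show "indicator {0<..1} (t - real_of_int n) * H t = H t * (indicator {\<lceil>t\<rceil> - 1} n :: ennreal)"
        by (auto simp: indicator_def)
    qed
    then show "(\<integral>\<^sup>+n. indicator {0<..1} (t - real_of_int n) * H t \<partial>count_space UNIV) = H t"
      by simp
  qed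
  finally show ?thesis .
qed

lemma cost_bound:
  fixes G :: "real \<Rightarrow> real"
  assumes mono: "mono G" and x0: "G x0 < T" and above: "\<And>x. a < x \<Longrightarrow> T \<le> G x"
  shows "profile_cost G T \<le> (\<integral>\<^sup>+ t \<in> {..a+1}. ennreal (G t) \<partial>lborel)"
proof -
  let ?H = "\<lambda>t. ennreal (G t) * indicator {..a+1} t"
  have Hm: "?H \<in> borel_measurable borel"
    using borel_measurable_mono[OF mono] by measurable
  have pt: "profile_cost_at G T u \<le> (\<integral>\<^sup>+n. ?H (real_of_int n + u) \<partial>count_space UNIV)"
    if u: "u \<in> {0<..1}" for u
  proof -
    define S where "S = {n::int. T \<le> G (real_of_int n + u)}"
    define n0 where "n0 = \<lfloor>a - u\<rfloor> + 1"
    have n0a: "a < real_of_int n0 + u" "real_of_int n0 + u \<le> a + 1"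
      unfolding n0_def using u by linarith+
    have "n0 \<in> S" unfolding S_def using above[OF n0a(1)] by simp
    moreover have "bdd_below S"
    proof (rule bdd_belowI)
      fix n assume "n \<in> S"
      then have "T \<le> G (real_of_int n + u)" by (simp add: S_def)
      then have "x0 < real_of_int n + u"
        using x0 mono by (metis le_less_trans linorder_not_le monoD)
      then show "\<lfloor>x0 - u\<rfloor> \<le> n" by linarith
    qed
    ultimately have fi: "first_index G T u \<le> n0"
      unfolding first_index_def S_def[symmetric] by (rule cInf_lower)
    show ?thesis unfolding profile_cost_at_def
    proof (rule nn_integral_mono)
      fix n :: int
      show "indicator {..first_index G T u} n * ennreal (G (real_of_int n + u)) \<le> ?H (real_of_int n + u)"
      proof (cases "n \<le> first_index G T u")
        case True
        then have "real_of_int n + u \<le> a + 1" using fi n0a(2) by linarith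
        then show ?thesis using True by (simp add: indicator_def)
      next
        case False
        then show ?thesis by (simp add: indicator_def)
      qed
    qed
  qed
  have "profile_cost G T \<le> (\<integral>\<^sup>+u. (\<integral>\<^sup>+n. ?H (real_of_int n + u) \<partial>count_space UNIV) * indicator {0<..1} u \<partial>lborel)"
    unfolding profile_cost_def
  proof (intro nn_integral_mono)
    fix u :: real
    show "profile_cost_at G T u * indicator {0<..1} u \<le> (\<integral>\<^sup>+n. ?H (real_of_int n + u) \<partial>count_space UNIV) * indicator {0<..1} u"
      using pt[of u] by (cases "u \<in> {0<..1}") auto
  qed
  also have "\<dots> = (\<integral>\<^sup>+t. ?H t \<partial>lborel)"
    by (rule shift_sum[OF Hm])
  finally show ?thesis .
qed

lemma lower_int:
  fixes G :: "real \<Rightarrow> real"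
  assumes "\<And>t. t \<in> {b<..c} \<Longrightarrow> d \<le> G t" "{b<..c} \<subseteq> A" "0 \<le> d" "b \<le> c"
  shows "ennreal (d * (c - b)) \<le> (\<integral>\<^sup>+ t \<in> A. ennreal (G t) \<partial>lborel)"
proof -
  have "ennreal (d * (c - b)) = (\<integral>\<^sup>+ t. ennreal d * indicator {b<..c} t \<partial>lborel)"
    using assms by (simp add: nn_integral_cmult_indicator ennreal_mult)
  also have "\<dots> \<le> (\<integral>\<^sup>+ t \<in> A. ennreal (G t) \<partial>lborel)"
  proof (rule nn_integral_mono)
    fix t show "ennreal d * indicator {b<..c} t \<le> ennreal (G t) * indicator A t"
      using assms by (cases "t \<in> {b<..c}") (auto simp: indicator_def intro!: ennreal_leI)
  qed
  finally show ?thesis .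
qed

theorem corollary1:
  fixes rho chi :: real and G :: "real \<Rightarrow> real"
  assumes "1 < chi" and "chi \<le> rho" and "bidding_profile rho chi G"
  shows "robust_strategy rho (profile_cost G) \<and> consistent_strategy chi (profile_cost G)"
proof -
  have mono: "mono G" and lc: "\<And>x. continuous (at_left x) G" and pos: "\<And>x. 0 < G x"
    and neg: "\<And>x. x < 0 \<Longrightarrow> G x < 1" and posi: "\<And>x. x > 0 \<Longrightarrow> 1 \<le> G x"
    and rob: "\<And>x. (\<integral>\<^sup>+ t \<in> {..x+1}. ennreal (G t) \<partial>lborel) \<le> ennreal (rho * G x)"
    and con: "(\<integral>\<^sup>+ t \<in> {..1}. ennreal (G t) \<partial>lborel) \<le> ennreal chi"
    using assms(3) unfolding bidding_profile_def by auto
  have rho0: "0 < rho" using assms by linarith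
  have cons: "consistent_strategy chi (profile_cost G)"
    unfolding consistent_strategy_def
    using cost_bound[OF mono, of "-1" 1 0] neg posi con by (auto intro: order_trans)
  have "profile_cost G T \<le> ennreal (rho * T)" if T: "T > 0" for T
  proof -
    obtain x0 where x0: "G x0 < T"
    proof (rule ccontr)
      assume "\<not> thesis"
      with that have all: "\<And>x. T \<le> G x" by (meson not_le)
      define k where "k = chi / T + 1"
      have k0: "0 \<le> k" using T assms(1) unfolding k_def by (simp add: field_simps)
      have "ennreal (T * (1 - (1 - k))) \<le> (\<integral>\<^sup>+ t \<in> {..1}. ennreal (G t) \<partial>lborel)"
        by (rule lower_int) (use all T k0 in auto)
      with con have "ennreal (T * k) \<le> ennreal chi" by simp
      then have "T * k \<le> chi" using assms(1) by (simp add: ennreal_le_iff)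
      moreover have "T * k = chi + T" using T unfolding k_def by (simp add: field_simps)
      ultimately show False using T by linarith
    qed
    have "ennreal (1 * (rho * T + 1 - 0)) \<le> (\<integral>\<^sup>+ t \<in> {..rho * T+1}. ennreal (G t) \<partial>lborel)"
      by (rule lower_int) (use posi rho0 T in auto)
    with rob[of "rho * T"] have "ennreal (rho * T + 1) \<le> ennreal (rho * G (rho * T))"
      by simp
    then have "rho * T + 1 \<le> rho * G (rho * T)"
      using rho0 pos[of "rho * T"] by (simp add: ennreal_le_iff)
    then have "rho * T < rho * G (rho * T)" by linarith
    then have big: "T \<le> G (rho * T)" using rho0 by simp
    define S where "S = {x. T \<le> G x}"
    define a where "a = Inf S"
    have Sne: "S \<noteq> {}" using big S_def by auto
    have Sbdd: "bdd_below S"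
    proof (rule bdd_belowI)
      fix x assume "x \<in> S"
      then have "T \<le> G x" by (simp add: S_def)
      then show "x0 \<le> x" using x0 mono by (metis le_less_trans linorder_not_le monoD less_imp_le)
    qed
    have above: "T \<le> G x" if "a < x" for x
    proof -
      obtain y where "y \<in> S" "y < x" using cInf_less_iff[OF Sne Sbdd] \<open>a < x\<close> a_def by auto
      then show ?thesis using mono by (auto simp: S_def mono_def intro: order_trans)
    qed
    have below: "G x < T" if "x < a" for x
    proof (rule ccontr)
      assume "\<not> G x < T"
      then have "x \<in> S" by (simp add: S_def)
      then have "a \<le> x" unfolding a_def using Sbdd by (rule cInf_lower)
      then show False using that by simp
    qed
    have Ga: "G a \<le> T"
    proof (rule tendsto_upperbound)
      show "(G \<longlongrightarrow> G a) (at_left a)" using lc[of a] by (simp add: continuous_within)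
      show "\<forall>\<^sub>F x in at_left a. G x \<le> T"
        by (auto simp: eventually_at_left_field intro!: exI[of _ "a - 1"] less_imp_le below)
      show "at_left a \<noteq> bot" by simp
    qed
    have "profile_cost G T \<le> (\<integral>\<^sup>+ t \<in> {..a+1}. ennreal (G t) \<partial>lborel)"
      by (rule cost_bound[OF mono x0 above])
    also have "\<dots> \<le> ennreal (rho * G a)" by (rule rob)
    also have "\<dots> \<le> ennreal (rho * T)"
      using Ga rho0 by (intro ennreal_leI mult_left_mono) auto
    finally show ?thesis .
  qed
  then show ?thesis using cons unfolding robust_strategy_def by auto
qed

end
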